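(* Let $M\in\mathcal{I}_1$ be bounded, with $4\notin M$ and $\max M\ge5$. Then $\max M\ge7$.
   Context: For a summable sequence $\mathbf{x}=(x_n)$ of positive reals, $\mathcal{A}(\mathbf{x})=\{\sum_{n\in A}x_n: A\subseteq\mathbb{N}\}$ is its achievement set and its cardinal function $f$ assigns to $x\in\mathcal{A}(\mathbf{x})$ the cardinality (a positive integer, $\omega$, or $\mathfrak{c}$) of $\{(\varepsilon_n)\in\{0,1\}^{\mathbb{N}}:\sum\varepsilon_nx_n=x\}$. $\mathcal{I}_1$ is the family of ranges of cardinal functions of such sequences whose achievement set is a single closed interval. A set $M\subseteq\{1,2,\dots\}\cup\{\omega,\mathfrak{c}\}$ is bounded if there is $N\in\mathbb{N}$ with $M\subseteq\{1,\dots,N\}$. *)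

theory Defs
  imports "HOL-Analysis.Analysis"
begin

datatype cval = Fin nat | Omega | Cont

text \<open>A 0-1 sequence (epsilon_n) is identified with the set A = {n. epsilon_n = 1}.
  reps x t is the set of 0-1 sequences with sum of epsilon_n x_n equal to t.\<close>
definition reps :: "(nat \<Rightarrow> real) \<Rightarrow> real \<Rightarrow> nat set set" where
  "reps x t = {A. (\<lambda>n. if n \<in> A then x n else 0) sums t}"

definition achievement_set :: "(nat \<Rightarrow> real) \<Rightarrow> real set" where
  "achievement_set x = {t. reps x t \<noteq> {}}"

text \<open>Cardinality of the representation set; uncountable sets of representations
  have cardinality continuum (they are closed subsets of the Cantor space).\<close>
definition cardfun :: "(nat \<Rightarrow> real) \<Rightarrow> real \<Rightarrow> cval" where
  "cardfun x t = (if finite (reps x t) then Fin (card (reps x t))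
                  else if countable (reps x t) then Omega else Cont)"

definition I1 :: "cval set \<Rightarrow> bool" where
  "I1 M \<longleftrightarrow> (\<exists>x. (\<forall>n. x n > 0) \<and> summable x \<and>
      (\<exists>a b. achievement_set x = {a..b}) \<and> M = cardfun x ` achievement_set x)"

definition bounded_cset :: "cval set \<Rightarrow> bool" where
  "bounded_cset M \<longleftrightarrow> (\<exists>N. M \<subseteq> Fin ` {1..N})"

end

theory Submission
  imports Defs
begin

locale posseq =
  fixes y :: "nat \<Rightarrow> real"
  assumes ypos: "\<And>n. y n > 0" and ysum: "summable y"
begin

definition sb :: "nat set \<Rightarrow> real" where "sb B = infsum y B"

lemma summ_UNIV: "y summable_on UNIV"
  using summable_nonneg_imp_summable_on[OF ysum] ypos less_imp_le by blast

lemma summ: "y summable_on B"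
  using summable_on_subset_banach[OF summ_UNIV] by blast

lemma sb_nonneg: "sb B \<ge> 0"
  unfolding sb_def by (rule infsum_nonneg) (use ypos less_imp_le in auto)

lemma sb_mono: "B \<subseteq> C \<Longrightarrow> sb B \<le> sb C"
  unfolding sb_def by (rule infsum_mono_neutral) (use summ ypos in \<open>auto intro: less_imp_le\<close>)

lemma sb_Un: "B \<inter> C = {} \<Longrightarrow> sb (B \<union> C) = sb B + sb C"
  unfolding sb_def by (rule infsum_Un_disjoint) (use summ in auto)

lemma sb_finite: "finite B \<Longrightarrow> sb B = sum y B"
  unfolding sb_def by simp

lemma sb_empty[simp]: "sb {} = 0"
  unfolding sb_def by simp

lemma sb_single[simp]: "sb {n} = y n"
  by (simp add: sb_finite)

lemma sb_insert: "n \<notin> B \<Longrightarrow> sb (insert n B) = y n + sb B"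
  using sb_Un[of "{n}" B] by simp

lemma sb_pos: "B \<noteq> {} \<Longrightarrow> sb B > 0"
proof -
  assume "B \<noteq> {}" then obtain n where n: "n \<in> B" by blast
  have "sb B = sb (insert n (B - {n}))" using n by (simp add: insert_absorb)
  also have "\<dots> = y n + sb (B - {n})" by (rule sb_insert) simp
  finally show ?thesis using ypos[of n] sb_nonneg[of "B - {n}"] by linarith
qed

lemma sb_diff: "B \<subseteq> C \<Longrightarrow> sb C = sb B + sb (C - B)"
  using sb_Un[of B "C - B"] by (simp add: Un_absorb1 Un_Diff_cancel)

lemma sb_eq_subset: "B \<subseteq> C \<Longrightarrow> sb B = sb C \<Longrightarrow> B = C"
  using sb_diff[of B C] sb_pos[of "C - B"] by auto

lemma sums_iff_sb: "(\<lambda>n. if n \<in> B then y n else 0) sums t \<longleftrightarrow> sb B = t"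
proof
  assume "(\<lambda>n. if n \<in> B then y n else 0) sums t"
  then have "((\<lambda>n. if n \<in> B then y n else 0) has_sum t) UNIV"
    by (rule sums_nonneg_imp_has_sum) (use ypos less_imp_le in auto)
  then have "(y has_sum t) B"
    by (subst has_sum_cong_neutral[where g="\<lambda>n. if n \<in> B then y n else 0" and T=UNIV]) auto
  then show "sb B = t" unfolding sb_def by (rule infsumI)
next
  assume "sb B = t"
  then have "(y has_sum t) B" unfolding sb_def using summ has_sum_infsum by blast
  then have "((\<lambda>n. if n \<in> B then y n else 0) has_sum t) UNIV"
    by (subst has_sum_cong_neutral[where g=y and T=B]) auto
  then show "(\<lambda>n. if n \<in> B then y n else 0) sums t" by (rule has_sum_imp_sums)
qed

lemma reps_eq: "reps y t = {B. sb B = t}"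
  unfolding reps_def using sums_iff_sb by auto

definition r :: "nat \<Rightarrow> real" where "r n = sb {n..}"

lemma r_Suc: "r n = y n + r (Suc n)"
proof -
  have "{n..} = insert n {Suc n..}" by auto
  then show ?thesis unfolding r_def using sb_insert[of n "{Suc n..}"] by simp
qed

lemma r_pos: "r n > 0" unfolding r_def by (rule sb_pos) auto

lemma r_antimono: "m \<le> n \<Longrightarrow> r n \<le> r m"
  unfolding r_def by (rule sb_mono) auto

lemma sb_UNIV: "sb UNIV = suminf y"
proof -
  have "(y has_sum sb UNIV) UNIV" unfolding sb_def using summ has_sum_infsum by blast
  then have "y sums sb UNIV" by (rule has_sum_imp_sums)
  then show ?thesis by (simp add: sums_unique)
qed

lemma r_eq: "r n = suminf y - sum y {..<n}"
proof -
  have u: "{..<n} \<union> {n..} = UNIV" by auto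
  have "sb UNIV = sb {..<n} + sb {n..}" using sb_Un[of "{..<n}" "{n..}"] u by (simp add: disjoint_iff)
  then show ?thesis unfolding r_def using sb_UNIV sb_finite[of "{..<n}"] by simp
qed

lemma r_tendsto: "r \<longlonglongrightarrow> 0"
proof -
  have "(\<lambda>n. sum y {..<n}) \<longlonglongrightarrow> suminf y" using ysum summable_LIMSEQ by blast
  then have "(\<lambda>n. suminf y - sum y {..<n}) \<longlonglongrightarrow> suminf y - suminf y"
    by (intro tendsto_intros)
  then show ?thesis using r_eq by (simp add: fun_eq_iff[symmetric] del: ) (metis (no_types) r_eq ext)
qed

lemma r_small: "e > 0 \<Longrightarrow> \<exists>P\<ge>p. r P < e"
proof -
  assume "e > 0"
  then obtain N where "\<forall>n\<ge>N. \<bar>r n\<bar> < e" using r_tendsto LIMSEQ_iff[of r 0] by auto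
  then have "\<bar>r (max p N)\<bar> < e" by auto
  then show ?thesis by (intro exI[of _ "max p N"]) auto
qed

end

fun grd :: "(nat\<Rightarrow>real) \<Rightarrow> nat \<Rightarrow> real \<Rightarrow> nat \<Rightarrow> real" where
  "grd y p t 0 = 0"
| "grd y p t (Suc n) = grd y p t n + (if p \<le> n \<and> grd y p t n + y n \<le> t then y n else 0)"

context posseq
begin

lemma A_eq: "achievement_set y = {t. \<exists>B. sb B = t}"
  unfolding achievement_set_def reps_eq by auto

lemma sb_le_UNIV: "sb B \<le> sb UNIV" by (rule sb_mono) auto

lemma A_interval:
  assumes "achievement_set y = {a..b}"
  shows "achievement_set y = {0..sb UNIV}"
proof -
  have m: "t \<in> {a..b} \<longleftrightarrow> (\<exists>B. sb B = t)" for t using assms A_eq by auto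
  have "0 \<in> {a..b}" using m[of 0] sb_empty by blast
  have "a \<in> {a..b}" "b \<in> {a..b}" using \<open>0 \<in> {a..b}\<close> by auto
  then obtain B1 B2 where "sb B1 = a" "sb B2 = b" using m by blast
  then have "a \<ge> 0" "b \<le> sb UNIV" using sb_nonneg sb_le_UNIV by auto
  moreover have "a \<le> 0" using \<open>0 \<in> {a..b}\<close> by auto
  moreover have "sb UNIV \<le> b" using m[of "sb UNIV"] by auto
  ultimately have "a = 0" "b = sb UNIV" by auto
  then show ?thesis using assms by simp
qed

lemma sum_Int_lessThan_sums:
  "(\<lambda>n. sum y (B \<inter> {..<n})) \<longlonglongrightarrow> sb B"
proof -
  have "(\<lambda>n. if n \<in> B then y n else 0) sums sb B" using sums_iff_sb by blast
  then have "(\<lambda>n. \<Sum>k<n. if k \<in> B then y k else 0) \<longlonglongrightarrow> sb B" by (simp add: sums_def)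
  moreover have "(\<Sum>k<n. if k \<in> B then y k else 0) = sum y (B \<inter> {..<n})" for n
    by (simp add: sum.If_cases Int_commute)
  ultimately show ?thesis by simp
qed

end

locale sortedseq = posseq +
  assumes ydec: "\<And>m n. m \<le> n \<Longrightarrow> y n \<le> y m"
  and yint: "achievement_set y = {0..sb UNIV}"
begin

lemma kakeya: "y n \<le> r (Suc n)"
proof (rule ccontr)
  assume nt: "\<not> y n \<le> r (Suc n)"
  define t where "t = (y n + r (Suc n)) / 2"
  have t1: "r (Suc n) < t" "t < y n" using nt unfolding t_def by auto
  have "y n \<le> sb UNIV" using sb_le_UNIV[of "{n}"] by simp
  then have "t \<in> achievement_set y" using yint t1 r_pos[of "Suc n"] by auto
  then obtain B where B: "sb B = t" using A_eq by auto
  show False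
  proof (cases "B \<subseteq> {Suc n..}")
    case True
    then have "sb B \<le> r (Suc n)" unfolding r_def by (rule sb_mono)
    then show False using B t1 by simp
  next
    case False
    then obtain i where i: "i \<in> B" "i \<le> n" by (metis atLeast_iff not_less_eq_eq subsetI)
    have "y i \<le> sb B" using sb_mono[of "{i}" B] i by simp
    moreover have "y n \<le> y i" using ydec i by simp
    ultimately show False using B t1 by simp
  qed
qed

lemma greedy:
  assumes "0 \<le> t" "t \<le> r p"
  shows "\<exists>B. B \<subseteq> {p..} \<and> sb B = t"
proof -
  define g where "g = grd y p t"
  define B where "B = {n. p \<le> n \<and> g n + y n \<le> t}"
  have gB: "g n = sum y (B \<inter> {..<n})" for n
  proof (induction n)
    case 0 then show ?case by (simp add: g_def)
  next
    case (Suc n)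
    have "B \<inter> {..<Suc n} = (if n \<in> B then insert n (B \<inter> {..<n}) else B \<inter> {..<n})"
      by (auto simp: lessThan_Suc)
    then show ?case using Suc unfolding g_def B_def by (simp only: grd.simps) (simp add: Int_insert_left)
  qed
  have g0: "n \<le> p \<Longrightarrow> g n = 0" for n
    by (induction n) (auto simp: g_def)
  have inv: "g n \<le> t \<and> t - g n \<le> r n" if "p \<le> n" for n
    using that
  proof (induction n rule: dec_induct)
    case base then show ?case using g0[of p] assms by simp
  next
    case (step n)
    show ?case
    proof (cases "g n + y n \<le> t")
      case True
      then have "g (Suc n) = g n + y n" using step by (simp add: g_def)
      then show ?thesis using True step r_Suc[of n] by simp
    next
      case False
      then have "g (Suc n) = g n" using step by (simp add: g_def)
      then show ?thesis using False step kakeya[of n] by simp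
    qed
  qed
  have "g \<longlonglongrightarrow> t"
  proof (rule LIMSEQ_I)
    fix e :: real assume "e > 0"
    then obtain N where N: "\<forall>n\<ge>N. \<bar>r n\<bar> < e" using r_tendsto LIMSEQ_iff[of r 0] by auto
    show "\<exists>no. \<forall>n\<ge>no. norm (g n - t) < e"
    proof (intro exI allI impI)
      fix n assume "max N p \<le> n"
      then show "norm (g n - t) < e" using N inv[of n] by auto
    qed
  qed
  moreover have "g = (\<lambda>n. sum y (B \<inter> {..<n}))" using gB by auto
  then have "g \<longlonglongrightarrow> sb B" using sum_Int_lessThan_sums by simp
  ultimately have "sb B = t" using LIMSEQ_unique by blast
  moreover have "B \<subseteq> {p..}" unfolding B_def by auto
  ultimately show ?thesis by blast
qed

end

context sortedseq
begin

definition RT :: "nat \<Rightarrow> real \<Rightarrow> nat set set" where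
  "RT p s = {B. B \<subseteq> {p..} \<and> sb B = s}"

lemma RT_nonempty: "0 \<le> s \<Longrightarrow> s \<le> r p \<Longrightarrow> RT p s \<noteq> {}"
  using greedy unfolding RT_def by blast

lemma RT_sub_reps: "RT p s \<subseteq> reps y s"
  unfolding RT_def reps_eq by auto

lemma finitely_many_strict:
  assumes fin: "\<And>t. finite (reps y t) \<and> card (reps y t) \<le> N"
  shows "\<exists>n0. \<forall>n\<ge>n0. y n = r (Suc n)"
proof (rule ccontr)
  assume nt: "\<not> (\<exists>n0. \<forall>n\<ge>n0. y n = r (Suc n))"
  have strict: "\<exists>m\<ge>p. y m < r (Suc m)" for p
  proof -
    obtain m where "m \<ge> p" "y m \<noteq> r (Suc m)" using nt by blast
    then show ?thesis using kakeya[of m] by (intro exI[of _ m]) auto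
  qed
  have finRT: "finite (RT p s)" for p s using fin[of s] RT_sub_reps[of p s] finite_subset[of "RT p s" "reps y s"] by simp
  define Cl where "Cl k \<longleftrightarrow> (\<forall>p. \<exists>a b. 0 \<le> a \<and> a < b \<and> b \<le> r p \<and> (\<forall>s\<in>{a..b}. k \<le> card (RT p s)))" for k
  have D: "\<exists>a b. c \<le> a \<and> a < b \<and> b \<le> d \<and> (\<forall>s\<in>{a..b}. k \<le> card (RT p s))"
    if hyp: "Cl k" "0 \<le> c" "c < d" "d \<le> r p" for k p c d
  proof -
    define m where "m = (c + d) / 2"
    have "0 \<le> m" "m \<le> r p" using hyp unfolding m_def by auto
    then obtain B where B: "B \<subseteq> {p..}" "sb B = m" using greedy[of m p] by auto
    obtain P where P: "P \<ge> p" "r P < (d - c) / 2" using r_small[of "(d - c)/2" p] hyp by auto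
    define F where "F = B \<inter> {..<P}"
    define B' where "B' = B \<inter> {P..}"
    have "B = F \<union> B'" "F \<inter> B' = {}" unfolding F_def B'_def by auto
    then have sbB: "sb B = sb F + sb B'" using sb_Un by simp
    have "sb B' \<le> r P" unfolding r_def B'_def by (rule sb_mono) auto
    have "sb B' \<ge> 0" by (rule sb_nonneg)
    obtain a' b' where ab: "0 \<le> a'" "a' < b'" "b' \<le> r P" "\<forall>s\<in>{a'..b'}. k \<le> card (RT P s)"
      using \<open>Cl k\<close> unfolding Cl_def by blast
    show ?thesis
    proof (intro exI conjI ballI)
      have "sb F = m - sb B'" using sbB B(2) by simp
      moreover have "m - r P > c" using P(2) unfolding m_def by (simp add: field_simps)
      ultimately show "c \<le> sb F + a'" using \<open>sb B' \<le> r P\<close> ab(1) by linarith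
      show "sb F + a' < sb F + b'" using ab by simp
      have "sb F \<le> m" using sbB B(2) \<open>sb B' \<ge> 0\<close> by simp
      moreover have "m + r P < d" using P(2) unfolding m_def by (simp add: field_simps)
      ultimately show "sb F + b' \<le> d" using ab(3) by linarith
      fix s assume s: "s \<in> {sb F + a'..sb F + b'}"
      then have "k \<le> card (RT P (s - sb F))" using ab by auto
      also have "card (RT P (s - sb F)) \<le> card (RT p s)"
      proof (rule card_inj_on_le[where f="\<lambda>C. F \<union> C"])
        show "inj_on (\<lambda>C. F \<union> C) (RT P (s - sb F))"
        proof (rule inj_onI)
          fix C1 C2 assume "C1 \<in> RT P (s - sb F)" "C2 \<in> RT P (s - sb F)" "F \<union> C1 = F \<union> C2"
          then have "(F \<union> C1) \<inter> {P..} = (F \<union> C2) \<inter> {P..}" by simp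
          moreover have "F \<inter> {P..} = {}" unfolding F_def by auto
          ultimately show "C1 = C2" using \<open>C1 \<in> RT P (s - sb F)\<close> \<open>C2 \<in> RT P (s - sb F)\<close>
            unfolding RT_def by auto
        qed
        show "(\<lambda>C. F \<union> C) ` RT P (s - sb F) \<subseteq> RT p s"
        proof
          fix X assume "X \<in> (\<lambda>C. F \<union> C) ` RT P (s - sb F)"
          then obtain C where C: "C \<subseteq> {P..}" "sb C = s - sb F" "X = F \<union> C" unfolding RT_def by auto
          have "F \<inter> C = {}" using C unfolding F_def by auto
          then have "sb X = s" using C sb_Un by simp
          moreover have "X \<subseteq> {p..}" using C B P unfolding F_def by auto
          ultimately show "X \<in> RT p s" unfolding RT_def by auto
        qed
        show "finite (RT p s)" by (rule finRT)
      qed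
      finally show "k \<le> card (RT p s)" .
    qed
  qed
  have "Cl k" for k
  proof (induction k)
    case 0
    show ?case unfolding Cl_def
    proof
      fix p show "\<exists>a b. 0 \<le> a \<and> a < b \<and> b \<le> r p \<and> (\<forall>s\<in>{a..b}. 0 \<le> card (RT p s))"
        using r_pos[of p] by (intro exI[of _ 0] exI[of _ "r p"]) auto
    qed
  next
    case (Suc k)
    show ?case unfolding Cl_def
    proof
      fix p
      obtain m where m: "m \<ge> p" "y m < r (Suc m)" using strict by blast
      obtain a b where ab: "y m \<le> a" "a < b" "b \<le> r (Suc m)" "\<forall>s\<in>{a..b}. k \<le> card (RT (Suc m) s)"
        using D[OF Suc, of "y m" "r (Suc m)" "Suc m"] m ypos[of m] by auto
      show "\<exists>a b. 0 \<le> a \<and> a < b \<and> b \<le> r p \<and> (\<forall>s\<in>{a..b}. Suc k \<le> card (RT p s))"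
      proof (intro exI conjI ballI)
        show "0 \<le> a" using ab ypos[of m] by linarith
        show "a < b" by fact
        show "b \<le> r p" using ab r_antimono[of p "Suc m"] m by linarith
        fix s assume s: "s \<in> {a..b}"
        obtain C where C: "C \<in> RT (Suc m) (s - y m)"
        proof -
          have "s - y m \<le> r (Suc m)" using s ab(3) ypos[of m] by auto
          moreover have "0 \<le> s - y m" using s ab(1) by auto
          ultimately show ?thesis using RT_nonempty[of "s - y m" "Suc m"] that by blast
        qed
        have Cm: "insert m C \<in> RT p s"
        proof -
          have "m \<notin> C" using C unfolding RT_def by auto
          then have "sb (insert m C) = s" using C sb_insert unfolding RT_def by auto
          moreover have "insert m C \<subseteq> {p..}" using C m unfolding RT_def by auto
          ultimately show ?thesis unfolding RT_def by auto
        qed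
        have sub: "RT (Suc m) s \<subseteq> RT p s" using m unfolding RT_def by auto
        have nin: "insert m C \<notin> RT (Suc m) s" unfolding RT_def by auto
        have "Suc k \<le> Suc (card (RT (Suc m) s))" using ab s by auto
        also have "\<dots> = card (insert (insert m C) (RT (Suc m) s))"
          using nin finRT by simp
        also have "\<dots> \<le> card (RT p s)"
          by (rule card_mono) (use finRT sub Cm in auto)
        finally show "Suc k \<le> card (RT p s)" .
      qed
    qed
  qed
  then obtain a b where ab: "0 \<le> a" "a < b" "b \<le> r 0" "\<forall>s\<in>{a..b}. Suc N \<le> card (RT 0 s)"
    unfolding Cl_def by blast
  then have "Suc N \<le> card (RT 0 a)" by auto
  moreover have "card (RT 0 a) \<le> card (reps y a)" using fin[of a] RT_sub_reps[of 0 a] by (intro card_mono) auto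
  ultimately show False using fin[of a] by linarith
qed

end

locale geomtail = sortedseq +
  fixes n0 :: nat
  assumes geo: "\<And>n. n \<ge> n0 \<Longrightarrow> y n = r (Suc n)"
begin

definition q where "q = y n0"
definition Dy :: "real set" where "Dy = {q * of_int m / 2^J | m J. True}"

lemma q_pos: "q > 0" unfolding q_def using ypos by simp

lemma y_half: "n \<ge> n0 \<Longrightarrow> y n = 2 * y (Suc n)"
  using geo[of n] geo[of "Suc n"] r_Suc[of "Suc n"] by simp

lemma y_geo: "y (n0 + j) = q / 2^j"
proof (induction j)
  case 0 then show ?case by (simp add: q_def)
next
  case (Suc j)
  then show ?case using y_half[of "n0 + j"] by simp
qed

lemma r_n0: "r n0 = 2 * q"
  using geo[of n0] r_Suc[of n0] unfolding q_def by simp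

lemma Dy_diff: "a \<in> Dy \<Longrightarrow> b \<in> Dy \<Longrightarrow> a - b \<in> Dy"
proof -
  assume "a \<in> Dy" "b \<in> Dy"
  then obtain m1 J1 m2 J2 where ab: "a = q * of_int m1 / 2^J1" "b = q * of_int m2 / 2^J2"
    unfolding Dy_def by blast
  have "a - b = q * of_int (m1 * 2^J2 - m2 * 2^J1) / 2^(J1 + J2)"
    unfolding ab by (simp add: field_simps power_add)
  then show ?thesis unfolding Dy_def by blast
qed

lemma Dy_0: "0 \<in> Dy" unfolding Dy_def by (intro CollectI exI[of _ 0]) simp

lemma Dy_add: "a \<in> Dy \<Longrightarrow> b \<in> Dy \<Longrightarrow> a + b \<in> Dy"
  using Dy_diff[of a "0 - b"] Dy_diff[of 0 b] Dy_0 by simp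

lemma Dy_y: "n \<ge> n0 \<Longrightarrow> y n \<in> Dy"
proof -
  assume "n \<ge> n0"
  then have "y n = q * of_int 1 / 2^(n - n0)" using y_geo[of "n - n0"] by simp
  then show ?thesis unfolding Dy_def by blast
qed

lemma Dy_L: "2 * q \<in> Dy"
proof -
  have "2 * q = q * of_int 2 / 2^0" by simp
  then show ?thesis unfolding Dy_def by blast
qed

lemma Dy_finite_sb: "finite B \<Longrightarrow> B \<subseteq> {n0..} \<Longrightarrow> sb B \<in> Dy"
proof (induction B rule: finite_induct)
  case empty then show ?case using Dy_0 by simp
next
  case (insert n B)
  then show ?case using sb_insert[of n B] Dy_add Dy_y by auto
qed

lemma Dy_countable: "countable Dy"
proof -
  have "Dy = (\<lambda>(m, J). q * of_int m / 2^J) ` (UNIV :: (int \<times> nat) set)"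
    unfolding Dy_def by auto
  then show ?thesis by simp
qed

lemma Dy_dense: "a < b \<Longrightarrow> \<exists>t. a < t \<and> t < b \<and> t - \<tau> \<in> Dy"
proof -
  assume ab: "a < b"
  obtain J :: nat where J: "q / (b - a) < 2^J"
    using real_arch_pow[of 2 "q / (b - a)"] by auto
  define u where "u = q / 2^J"
  have u: "u > 0" "u < b - a"
  proof -
    show "u > 0" unfolding u_def using q_pos by simp
    have "q < 2^J * (b - a)" using J ab by (simp add: pos_divide_less_eq mult.commute)
    then show "u < b - a" unfolding u_def by (simp add: divide_less_eq mult.commute)
  qed
  define m where "m = \<lfloor>(a - \<tau>) / u\<rfloor> + 1"
  have m1: "(a - \<tau>) / u < of_int m" unfolding m_def using real_of_int_floor_add_one_gt[of "(a - \<tau>) / u"] by simp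
  then have m1': "a - \<tau> < of_int m * u" using u(1) by (simp add: pos_divide_less_eq)
  have "of_int m \<le> (a - \<tau>) / u + 1" unfolding m_def using of_int_floor_le[of "(a - \<tau>) / u"] by simp
  then have "of_int m * u \<le> ((a - \<tau>) / u + 1) * u" using u(1) by (intro mult_right_mono) auto
  also have "\<dots> = a - \<tau> + u" using u(1) by (simp add: distrib_right)
  finally have m2: "of_int m * u \<le> a - \<tau> + u" .
  have "of_int m * u = q * of_int m / 2^J" unfolding u_def by simp
  then have "of_int m * u \<in> Dy" unfolding Dy_def by blast
  moreover have "a < \<tau> + of_int m * u" using m1' by simp
  moreover have "\<tau> + of_int m * u < b" using m2 u(2) by simp
  ultimately show ?thesis by (intro exI[of _ "\<tau> + of_int m * u"]) simp
qed

definition g :: "real \<Rightarrow> nat" where "g s = card (RT n0 s)"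

lemma first_diff:
  assumes "B \<in> RT n0 s" "C \<in> RT n0 s" "j \<in> B" "j \<notin> C" "B \<inter> {..<j} = C \<inter> {..<j}"
  shows "B = (B \<inter> {..<j}) \<union> {j} \<and> C = (B \<inter> {..<j}) \<union> {Suc j..}"
proof -
  define P where "P = B \<inter> {..<j}"
  define B2 where "B2 = B \<inter> {Suc j..}"
  define C2 where "C2 = C \<inter> {Suc j..}"
  have jn0: "j \<ge> n0" using assms unfolding RT_def by auto
  have tri: "x < j \<or> x = j \<or> x \<in> {Suc j..}" for x by auto
  have Bd: "B = insert j (P \<union> B2)"
  proof
    show "B \<subseteq> insert j (P \<union> B2)" unfolding P_def B2_def using tri by blast
    show "insert j (P \<union> B2) \<subseteq> B" unfolding P_def B2_def using assms(3) by blast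
  qed
  have Cd: "C = P \<union> C2"
  proof
    show "C \<subseteq> P \<union> C2" unfolding P_def C2_def using tri assms(4,5) by blast
    show "P \<union> C2 \<subseteq> C" unfolding P_def C2_def using assms(5) by blast
  qed
  have d1: "j \<notin> P \<union> B2" unfolding P_def B2_def by simp
  have d2: "P \<inter> B2 = {}" "P \<inter> C2 = {}" unfolding P_def B2_def C2_def by auto
  have sB: "sb B = y j + (sb P + sb B2)"
    using Bd sb_insert[OF d1] sb_Un[OF d2(1)] by simp
  have sC: "sb C = sb P + sb C2"
    using Cd sb_Un[OF d2(2)] by simp
  have "sb C2 \<le> r (Suc j)" unfolding r_def C2_def by (rule sb_mono) auto
  moreover have "r (Suc j) = y j" using geo jn0 by simp
  moreover have "sb B = sb C" using assms unfolding RT_def by auto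
  ultimately have "sb B2 \<le> 0" using sB sC by linarith
  then have "B2 = {}" using sb_pos[of B2] by linarith
  have "sb C2 = sb {Suc j..}" using sB sC \<open>sb B = sb C\<close> \<open>B2 = {}\<close> geo jn0 unfolding r_def by simp
  then have "C2 = {Suc j..}" by (intro sb_eq_subset) (auto simp: C2_def)
  show ?thesis using Bd Cd \<open>B2 = {}\<close> \<open>C2 = {Suc j..}\<close> unfolding P_def by auto
qed

lemma two_reps_finite:
  assumes "B \<in> RT n0 s" "C \<in> RT n0 s" "B \<noteq> C"
  shows "finite B \<noteq> finite C"
proof -
  obtain k where "(k \<in> B) \<noteq> (k \<in> C)" using assms(3) by blast
  define j where "j = (LEAST k. (k \<in> B) \<noteq> (k \<in> C))"
  have j: "(j \<in> B) \<noteq> (j \<in> C)" unfolding j_def by (rule LeastI) fact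
  have "i < j \<Longrightarrow> (i \<in> B) = (i \<in> C)" for i unfolding j_def using not_less_Least by blast
  then have eq: "B \<inter> {..<j} = C \<inter> {..<j}" by auto
  have inf: "\<not> finite (X \<union> {Suc j..})" for X :: "nat set" by (simp add: infinite_Ici)
  have fin: "finite ((X \<inter> {..<j}) \<union> {j})" for X :: "nat set" by simp
  show ?thesis
  proof (cases "j \<in> B")
    case True
    then have "j \<notin> C" using j by simp
    from first_diff[OF assms(1,2) True this eq]
    have "B = (B \<inter> {..<j}) \<union> {j}" "C = (B \<inter> {..<j}) \<union> {Suc j..}" by auto
    then have "finite B" "\<not> finite C" using inf[of "B \<inter> {..<j}"] fin[of B] by simp_all
    then show ?thesis by simp
  next
    case False
    then have "j \<in> C" using j by simp
    from first_diff[OF assms(2,1) this False eq[symmetric]]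
    have "C = (C \<inter> {..<j}) \<union> {j}" "B = (C \<inter> {..<j}) \<union> {Suc j..}" by auto
    then have "finite C" "\<not> finite B" using inf[of "C \<inter> {..<j}"] fin[of C] by simp_all
    then show ?thesis by simp
  qed
qed

lemma RT_le2: "finite (RT n0 s) \<and> card (RT n0 s) \<le> 2"
proof (cases "RT n0 s = {}")
  case True then show ?thesis by simp
next
  case False
  then obtain B0 where B0: "B0 \<in> RT n0 s" by blast
  show ?thesis
  proof (cases "RT n0 s \<subseteq> {B0}")
    case True
    then show ?thesis using finite_subset[OF True] card_mono[OF _ True] by fastforce
  next
    case False
    then obtain C where C: "C \<in> RT n0 s" "C \<noteq> B0" by blast
    have "RT n0 s \<subseteq> {B0, C}"
    proof
      fix X assume X: "X \<in> RT n0 s"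
      show "X \<in> {B0, C}"
      proof (rule ccontr)
        assume "X \<notin> {B0, C}"
        then show False using two_reps_finite[OF X B0] two_reps_finite[OF X C(1)]
          two_reps_finite[OF C(1) B0 C(2)] by auto
      qed
    qed
    moreover have "card {B0, C} = 2" using C(2) by simp
    ultimately show ?thesis using finite_subset[of "RT n0 s" "{B0, C}"] card_mono[of "{B0, C}" "RT n0 s"]
      by simp
  qed
qed

lemma finite_rep_exists: "m < 2^(Suc J) \<Longrightarrow> \<exists>B. B \<subseteq> {n0..n0+J} \<and> sb B = q * real m / 2^J"
proof (induction J arbitrary: m)
  case 0
  then have "m = 0 \<or> m = 1" by auto
  then show ?case
  proof
    assume "m = 0" then show ?thesis by (intro exI[of _ "{}"]) auto
  next
    assume "m = 1" then show ?thesis by (intro exI[of _ "{n0}"]) (auto simp: q_def)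
  qed
next
  case (Suc J)
  have "m div 2 < 2 ^ Suc J" using Suc.prems by auto
  then obtain B where B: "B \<subseteq> {n0..n0+J}" "sb B = q * real (m div 2) / 2^J" using Suc.IH by blast
  have md: "real m = 2 * real (m div 2) + real (m mod 2)"
    by (metis div_mult_mod_eq of_nat_add of_nat_mult of_nat_numeral mult.commute)
  show ?case
  proof (cases "m mod 2 = 0")
    case True
    then show ?thesis using B md by (intro exI[of _ B]) (auto simp: field_simps)
  next
    case False
    then have m1: "m mod 2 = 1" by auto
    have nin: "n0 + Suc J \<notin> B" using B by auto
    have "sb (insert (n0 + Suc J) B) = y (n0 + Suc J) + sb B" using nin by (rule sb_insert)
    also have "\<dots> = q * real m / 2^Suc J" using y_geo[of "Suc J"] B(2) md m1 by (simp add: field_simps)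
    finally show ?thesis using B(1) by (intro exI[of _ "insert (n0 + Suc J) B"]) auto
  qed
qed

end

lemma sep_lemmas:
  fixes F B :: "nat set"
  assumes "F \<subseteq> {..<n}" "B \<subseteq> {n..}"
  shows "(F \<union> B) \<inter> {n..} = B" "(F \<union> B) \<inter> {..<n} = F" "F \<inter> B = {}"
proof -
  have a: "x \<in> F \<Longrightarrow> x < n" for x using assms(1) by (simp add: subset_iff)
  have b: "x \<in> B \<Longrightarrow> n \<le> x" for x using assms(2) by (simp add: subset_iff)
  show "(F \<union> B) \<inter> {n..} = B" using a b by (auto simp: not_less[symmetric])
  show "(F \<union> B) \<inter> {..<n} = F" using a b by (auto simp: not_less[symmetric])
  show "F \<inter> B = {}" using a b by (auto simp: not_less[symmetric])
qed

context geomtail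
begin

lemma RT_sb_bounds: "B \<in> RT n0 s \<Longrightarrow> 0 \<le> s \<and> s \<le> 2 * q"
proof -
  assume B: "B \<in> RT n0 s"
  then have "sb B \<le> r n0" unfolding RT_def r_def by (auto intro: sb_mono)
  then show ?thesis using B sb_nonneg[of B] r_n0 unfolding RT_def by auto
qed

lemma g_out: "\<not> (0 \<le> s \<and> s \<le> 2 * q) \<Longrightarrow> g s = 0"
  unfolding g_def using RT_sb_bounds by (metis card.empty equals0I)

lemma RT_zero: "RT n0 0 = {{}}"
proof -
  have "B \<in> RT n0 0 \<Longrightarrow> B = {}" for B using sb_pos[of B] unfolding RT_def by force
  then show ?thesis unfolding RT_def by auto
qed

lemma RT_top: "RT n0 (2 * q) = {{n0..}}"
proof -
  have "B \<in> RT n0 (2 * q) \<Longrightarrow> B = {n0..}" for B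
    using sb_eq_subset[of B "{n0..}"] r_n0 unfolding RT_def r_def by auto
  moreover have "{n0..} \<in> RT n0 (2 * q)" using r_n0 unfolding RT_def r_def by auto
  ultimately show ?thesis by blast
qed

lemma g_nonempty: "0 \<le> s \<Longrightarrow> s \<le> 2 * q \<Longrightarrow> RT n0 s \<noteq> {}"
  using RT_nonempty r_n0 by simp

lemma g_dyadic:
  assumes "s \<in> Dy" "0 < s" "s < 2 * q"
  shows "g s = 2"
proof -
  obtain m :: int and J :: nat where s: "s = q * of_int m / 2^J" using assms(1) unfolding Dy_def by blast
  have "m > 0" using assms(2) q_pos unfolding s by (simp add: zero_less_mult_iff zero_less_divide_iff)
  have "q * of_int m < q * 2^(Suc J)" using assms(3) unfolding s by (simp add: field_simps)
  then have "of_int m < (2::real)^(Suc J)" using q_pos by simp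
  then have "(of_int m :: real) < of_int ((2::int)^(Suc J))" by simp
  then have "m < 2^(Suc J)" by (simp only: of_int_less_iff)
  then have "nat m < 2^(Suc J)" using \<open>m > 0\<close> by (simp add: nat_less_iff)
  then obtain B where B: "B \<subseteq> {n0..n0+J}" "sb B = q * real (nat m) / 2^J"
    using finite_rep_exists by blast
  have sbB: "sb B = s" using B(2) \<open>m > 0\<close> unfolding s by simp
  have "finite B" using B(1) finite_subset by blast
  have "B \<noteq> {}" using sbB assms(2) by auto
  define j where "j = Max B"
  have jB: "j \<in> B" unfolding j_def using \<open>finite B\<close> \<open>B \<noteq> {}\<close> by simp
  have jle: "i \<in> B \<Longrightarrow> i \<le> j" for i unfolding j_def using \<open>finite B\<close> by simp
  have jn0: "j \<ge> n0" using jB B(1) by auto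
  define C where "C = (B - {j}) \<union> {Suc j..}"
  have "x \<notin> {Suc j..}" if "x \<in> B" for x using jle[OF that] by simp
  then have d: "(B - {j}) \<inter> {Suc j..} = {}" by blast
  have "sb C = sb (B - {j}) + r (Suc j)" unfolding C_def r_def using sb_Un[OF d] by simp
  also have "\<dots> = sb (B - {j}) + y j" using geo jn0 by simp
  also have "\<dots> = sb B" using sb_insert[of j "B - {j}"] jB by (simp add: insert_absorb)
  finally have sbC: "sb C = s" using sbB by simp
  have "\<not> finite C" unfolding C_def by (simp add: infinite_Ici)
  then have "C \<noteq> B" using \<open>finite B\<close> by auto
  have "B \<in> RT n0 s" "C \<in> RT n0 s" using B(1) sbB sbC jn0 unfolding RT_def C_def by auto
  then have "card {B, C} \<le> card (RT n0 s)" using RT_le2[of s] by (intro card_mono) auto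
  then have "2 \<le> g s" using \<open>C \<noteq> B\<close> unfolding g_def by simp
  then show ?thesis using RT_le2[of s] unfolding g_def by simp
qed

lemma g_one:
  assumes "0 \<le> s" "s \<le> 2 * q" "\<not> (s \<in> Dy \<and> 0 < s \<and> s < 2 * q)"
  shows "g s = 1"
proof -
  have ne: "RT n0 s \<noteq> {}" using g_nonempty assms by simp
  have fin: "finite (RT n0 s)" using RT_le2 by simp
  have "card (RT n0 s) \<le> 1"
  proof (rule ccontr)
    assume "\<not> card (RT n0 s) \<le> 1"
    then obtain B C where BC: "B \<in> RT n0 s" "C \<in> RT n0 s" "B \<noteq> C"
      by (metis card_le_Suc0_iff_eq fin not_less_eq_eq le0 One_nat_def)
    then have "finite B \<or> finite C" using two_reps_finite by blast
    then obtain X where X: "X \<in> RT n0 s" "finite X" using BC by blast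
    then have "s \<in> Dy" using Dy_finite_sb[of X] unfolding RT_def by auto
    then have "s = 0 \<or> s = 2 * q" using assms by auto
    then show False using BC RT_zero RT_top by auto
  qed
  then show ?thesis using ne fin unfolding g_def by (simp add: card_gt_0_iff le_antisym Suc_leI)
qed

lemma g_formula: "g s = (if 0 \<le> s \<and> s \<le> 2 * q then (if s \<in> Dy \<and> 0 < s \<and> s < 2 * q then 2 else 1) else 0)"
  using g_out g_dyadic g_one by auto

lemma decomp:
  "reps y t = (\<Union>F\<in>Pow {..<n0}. (\<lambda>B. F \<union> B) ` RT n0 (t - sb F))"
proof
  show "reps y t \<subseteq> (\<Union>F\<in>Pow {..<n0}. (\<lambda>B. F \<union> B) ` RT n0 (t - sb F))"
  proof
    fix A assume A: "A \<in> reps y t"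
    then have sA: "sb A = t" unfolding reps_eq by simp
    define F where "F = A \<inter> {..<n0}"
    define B where "B = A \<inter> {n0..}"
    have AFB: "A = F \<union> B" unfolding F_def B_def by auto
    have "F \<inter> B = {}" unfolding F_def B_def by auto
    then have "sb A = sb F + sb B" using AFB sb_Un by simp
    then have "sb B = t - sb F" using sA by simp
    moreover have "B \<subseteq> {n0..}" unfolding B_def by simp
    ultimately have "B \<in> RT n0 (t - sb F)" unfolding RT_def by simp
    then have "A \<in> (\<lambda>B. F \<union> B) ` RT n0 (t - sb F)" using AFB by (rule rev_image_eqI)
    moreover have "F \<in> Pow {..<n0}" unfolding F_def by simp
    ultimately show "A \<in> (\<Union>F\<in>Pow {..<n0}. (\<lambda>B. F \<union> B) ` RT n0 (t - sb F))"
      by (rule UN_I[rotated])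
  qed
  show "(\<Union>F\<in>Pow {..<n0}. (\<lambda>B. F \<union> B) ` RT n0 (t - sb F)) \<subseteq> reps y t"
  proof
    fix A assume "A \<in> (\<Union>F\<in>Pow {..<n0}. (\<lambda>B. F \<union> B) ` RT n0 (t - sb F))"
    then obtain F where F: "F \<subseteq> {..<n0}" "A \<in> (\<lambda>B. F \<union> B) ` RT n0 (t - sb F)" by blast
    then obtain B where B: "B \<in> RT n0 (t - sb F)" "A = F \<union> B" by blast
    then have B2: "B \<subseteq> {n0..}" "sb B = t - sb F" unfolding RT_def by auto
    have "x \<notin> B" if "x \<in> F" for x using that F(1) B2(1)
      by (meson atLeast_iff lessThan_iff not_le subsetD)
    then have "F \<inter> B = {}" by blast
    then have "sb A = t" using B(2) B2(2) sb_Un by simp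
    then show "A \<in> reps y t" unfolding reps_eq by simp
  qed
qed

lemma card_decomp:
  "finite (reps y t) \<and> card (reps y t) = (\<Sum>F\<in>Pow {..<n0}. g (t - sb F))"
proof -
  have finRT: "finite (RT n0 s)" for s using RT_le2 by simp
  have inj: "inj_on (\<lambda>B. F \<union> B) (RT n0 s)" if "F \<subseteq> {..<n0}" for F s
  proof (rule inj_onI)
    fix B1 B2 assume B: "B1 \<in> RT n0 s" "B2 \<in> RT n0 s" "F \<union> B1 = F \<union> B2"
    have "B1 \<subseteq> {n0..}" "B2 \<subseteq> {n0..}" using B(1,2) unfolding RT_def by auto
    then have "(F \<union> B1) \<inter> {n0..} = B1" "(F \<union> B2) \<inter> {n0..} = B2"
      using sep_lemmas(1)[OF that] by auto
    then show "B1 = B2" using B(3) by metis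
  qed
  have disj: "((\<lambda>B. F1 \<union> B) ` RT n0 (t - sb F1)) \<inter> ((\<lambda>B. F2 \<union> B) ` RT n0 (t - sb F2)) = {}"
    if F12: "F1 \<in> Pow {..<n0}" "F2 \<in> Pow {..<n0}" "F1 \<noteq> F2" for F1 F2
  proof -
    have "X \<inter> {..<n0} = F1" if Xin: "X \<in> (\<lambda>B. F1 \<union> B) ` RT n0 (t - sb F1)" for X
    proof -
      obtain B where "B \<in> RT n0 (t - sb F1)" "X = F1 \<union> B" using Xin by blast
      then show ?thesis using sep_lemmas(2)[of F1 n0 B] F12(1) unfolding RT_def by simp
    qed
    moreover have "X \<inter> {..<n0} = F2" if Xin: "X \<in> (\<lambda>B. F2 \<union> B) ` RT n0 (t - sb F2)" for X
    proof -
      obtain B where "B \<in> RT n0 (t - sb F2)" "X = F2 \<union> B" using Xin by blast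
      then show ?thesis using sep_lemmas(2)[of F2 n0 B] F12(2) unfolding RT_def by simp
    qed
    ultimately show ?thesis using \<open>F1 \<noteq> F2\<close> by blast
  qed
  have fi: "finite (Pow {..<n0::nat})" by simp
  have fa: "\<forall>F\<in>Pow {..<n0}. finite ((\<lambda>B. F \<union> B) ` RT n0 (t - sb F))"
    using finRT by simp
  have da: "\<forall>F1\<in>Pow {..<n0}. \<forall>F2\<in>Pow {..<n0}. F1 \<noteq> F2 \<longrightarrow>
      ((\<lambda>B. F1 \<union> B) ` RT n0 (t - sb F1)) \<inter> ((\<lambda>B. F2 \<union> B) ` RT n0 (t - sb F2)) = {}"
    using disj by blast
  have "card (reps y t) = (\<Sum>F\<in>Pow {..<n0}. card ((\<lambda>B. F \<union> B) ` RT n0 (t - sb F)))"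
    unfolding decomp by (rule card_UN_disjoint[OF fi fa da])
  also have "\<dots> = (\<Sum>F\<in>Pow {..<n0}. g (t - sb F))"
  proof (rule sum.cong)
    fix F assume "F \<in> Pow {..<n0}"
    then have "inj_on (\<lambda>B. F \<union> B) (RT n0 (t - sb F))" using inj by blast
    then show "card ((\<lambda>B. F \<union> B) ` RT n0 (t - sb F)) = g (t - sb F)"
      unfolding g_def by (rule card_image)
  qed simp
  finally have "card (reps y t) = (\<Sum>F\<in>Pow {..<n0}. g (t - sb F))" .
  moreover have "finite (reps y t)" unfolding decomp using fi fa by (intro finite_UN_I) auto
  ultimately show ?thesis by blast
qed

end

lemma sum_ind_card:
  "finite I \<Longrightarrow> (\<Sum>i\<in>I. if P i then 1 else 0 :: nat) = card {i\<in>I. P i}"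
  by (simp add: sum.inter_filter[symmetric])

locale comb =
  fixes I :: "'i set" and \<sigma> :: "'i \<Rightarrow> real" and D :: "real set" and L Smax :: real and i0 :: 'i
    and f g :: "real \<Rightarrow> nat"
  assumes finI: "finite I" and i0: "i0 \<in> I" "\<sigma> i0 = 0" and pos: "\<And>i. i \<in> I \<Longrightarrow> i \<noteq> i0 \<Longrightarrow> \<sigma> i > 0"
  and L: "L > 0" "L \<in> D" and Ddiff: "\<And>a b. a \<in> D \<Longrightarrow> b \<in> D \<Longrightarrow> a - b \<in> D"
  and Dcount: "countable D" and Ddense: "\<And>a b \<tau>. a < b \<Longrightarrow> \<exists>t. a < t \<and> t < b \<and> t - \<tau> \<in> D"
  and Smax: "\<And>i. i \<in> I \<Longrightarrow> \<sigma> i + L \<le> Smax" and cover: "\<And>t. 0 \<le> t \<Longrightarrow> t \<le> Smax \<Longrightarrow> f t \<ge> 1"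
  and fdef: "\<And>t. f t = (\<Sum>i\<in>I. g (t - \<sigma> i))"
  and gdef: "\<And>s. g s = (if 0 \<le> s \<and> s \<le> L then (if s \<in> D \<and> 0 < s \<and> s < L then 2 else 1) else 0)"
  and vals: "\<And>t. f t \<ge> 1 \<Longrightarrow> f t \<noteq> 4 \<and> f t \<le> 6"
begin

lemma D0: "0 \<in> D" using Ddiff[OF L(2) L(2)] by simp
lemma Dneg: "a \<in> D \<Longrightarrow> -a \<in> D" using Ddiff[OF D0, of a] by simp
lemma Dadd: "a \<in> D \<Longrightarrow> b \<in> D \<Longrightarrow> a + b \<in> D" using Ddiff[of a "-b"] Dneg[of b] by simp
lemma sig_nonneg: "i \<in> I \<Longrightarrow> \<sigma> i \<ge> 0" using pos[of i] i0 by (cases "i = i0") auto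

definition Z where "Z = \<sigma> ` I \<union> (\<lambda>i. \<sigma> i + L) ` I"
definition R where "R z = {i\<in>I. \<sigma> i \<le> z \<and> z < \<sigma> i + L}"

lemma finZ: "finite Z" unfolding Z_def using finI by simp
lemma Z_nonneg: "w \<in> Z \<Longrightarrow> w \<ge> 0" unfolding Z_def using sig_nonneg L by force
lemma Z_le: "w \<in> Z \<Longrightarrow> w \<le> Smax" unfolding Z_def using Smax L by force
lemma sigZ: "i \<in> I \<Longrightarrow> \<sigma> i \<in> Z" unfolding Z_def by blast
lemma sigLZ: "i \<in> I \<Longrightarrow> \<sigma> i + L \<in> Z" unfolding Z_def by blast
lemma finR: "finite (R z)" unfolding R_def using finI by simp
lemma RI: "R z \<subseteq> I" unfolding R_def by blast

lemma realize: "\<exists>t. f t = card (R z) + card {i\<in>R z. \<tau> - \<sigma> i \<in> D}"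
proof -
  define Zg where "Zg = insert (z + 1) {w\<in>Z. w > z}"
  have finZg: "finite Zg" unfolding Zg_def using finZ by simp
  define \<delta> where "\<delta> = Min Zg - z"
  have "\<forall>w\<in>Zg. w > z" unfolding Zg_def by auto
  then have dpos: "\<delta> > 0" unfolding \<delta>_def using finZg Zg_def by (simp add: Min_gr_iff)
  have dle: "z + \<delta> \<le> w" if "w \<in> Z" "w > z" for w
  proof -
    have "w \<in> Zg" unfolding Zg_def using that by simp
    then have "Min Zg \<le> w" using finZg by simp
    then show ?thesis unfolding \<delta>_def by simp
  qed
  obtain t where t: "z < t" "t < z + \<delta>" "t - \<tau> \<in> D" using Ddense[of z "z + \<delta>" \<tau>] dpos by auto
  have gi: "g (t - \<sigma> i) = (if i \<in> R z then (if \<tau> - \<sigma> i \<in> D then 2 else 1) else 0)" if iI: "i \<in> I" for i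
  proof (cases "i \<in> R z")
    case True
    then have a: "\<sigma> i \<le> z" "z < \<sigma> i + L" unfolding R_def by auto
    have "\<sigma> i + L \<ge> z + \<delta>" using dle[OF sigLZ[OF iI]] a by simp
    then have b: "0 < t - \<sigma> i" "t - \<sigma> i < L" using a t by auto
    have "(t - \<sigma> i \<in> D) = (\<tau> - \<sigma> i \<in> D)"
    proof
      assume "t - \<sigma> i \<in> D"
      then have "(t - \<sigma> i) - (t - \<tau>) \<in> D" using t(3) Ddiff by blast
      then show "\<tau> - \<sigma> i \<in> D" by simp
    next
      assume "\<tau> - \<sigma> i \<in> D"
      then have "(t - \<tau>) + (\<tau> - \<sigma> i) \<in> D" using t(3) Dadd by blast
      then show "t - \<sigma> i \<in> D" by simp
    qed
    then show ?thesis using True b gdef[of "t - \<sigma> i"] by simp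
  next
    case False
    then have "\<sigma> i > z \<or> \<sigma> i + L \<le> z" using iI unfolding R_def by auto
    then have "t - \<sigma> i < 0 \<or> t - \<sigma> i > L"
    proof
      assume "\<sigma> i > z"
      then have "\<sigma> i \<ge> z + \<delta>" using dle[OF sigZ[OF iI]] by simp
      then show ?thesis using t by simp
    next
      assume "\<sigma> i + L \<le> z"
      then show ?thesis using t by simp
    qed
    then show ?thesis using False gdef[of "t - \<sigma> i"] by auto
  qed
  have "f t = (\<Sum>i\<in>I. (if i \<in> R z then 1 else 0) + (if i \<in> R z \<and> \<tau> - \<sigma> i \<in> D then 1 else 0))"
    unfolding fdef by (rule sum.cong) (use gi in auto)
  also have "\<dots> = card {i\<in>I. i \<in> R z} + card {i\<in>I. i \<in> R z \<and> \<tau> - \<sigma> i \<in> D}"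
    by (simp add: sum.distrib sum_ind_card[OF finI])
  also have "{i\<in>I. i \<in> R z} = R z" using RI by blast
  also have "{i\<in>I. i \<in> R z \<and> \<tau> - \<sigma> i \<in> D} = {i\<in>R z. \<tau> - \<sigma> i \<in> D}" using RI by blast
  finally show ?thesis by blast
qed

lemma generic: "\<exists>t. f t = card (R z)"
proof -
  have "countable (\<Union>i\<in>I. (\<lambda>d. \<sigma> i + d) ` D)" using finI Dcount
    by (intro countable_UN) (auto intro: countable_finite)
  then have "(\<Union>i\<in>I. (\<lambda>d. \<sigma> i + d) ` D) \<noteq> UNIV" using uncountable_UNIV_real by auto
  then obtain \<tau> where \<tau>: "\<tau> \<notin> (\<Union>i\<in>I. (\<lambda>d. \<sigma> i + d) ` D)" by blast
  have "\<tau> - \<sigma> i \<notin> D" if "i \<in> I" for i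
  proof
    assume "\<tau> - \<sigma> i \<in> D"
    then have "\<tau> \<in> (\<lambda>d. \<sigma> i + d) ` D" by (rule rev_image_eqI) simp
    then show False using \<tau> that by blast
  qed
  then have E: "{i\<in>R z. \<tau> - \<sigma> i \<in> D} = {}" using RI by blast
  obtain t where "f t = card (R z) + card {i\<in>R z. \<tau> - \<sigma> i \<in> D}" using realize by blast
  then have "f t = card (R z)" by (simp only: E card.empty add_0_right)
  then show ?thesis by blast
qed


lemma upper: "f t \<le> card {i\<in>I. \<sigma> i \<le> t \<and> t < \<sigma> i + L} + card {i\<in>I. \<sigma> i < t \<and> t \<le> \<sigma> i + L}"
proof -
  have "f t \<le> (\<Sum>i\<in>I. (if \<sigma> i \<le> t \<and> t < \<sigma> i + L then 1 else 0) + (if \<sigma> i < t \<and> t \<le> \<sigma> i + L then 1 else 0))"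
    unfolding fdef
  proof (rule sum_mono)
    fix i assume "i \<in> I"
    show "g (t - \<sigma> i) \<le> (if \<sigma> i \<le> t \<and> t < \<sigma> i + L then 1 else 0) + (if \<sigma> i < t \<and> t \<le> \<sigma> i + L then 1 else 0)"
      using gdef[of "t - \<sigma> i"] L(1) by auto
  qed
  also have "\<dots> = card {i\<in>I. \<sigma> i \<le> t \<and> t < \<sigma> i + L} + card {i\<in>I. \<sigma> i < t \<and> t \<le> \<sigma> i + L}"
    by (simp add: sum.distrib sum_ind_card[OF finI])
  finally show ?thesis .
qed

lemma step1:
  assumes "f t1 \<ge> 5"
  shows "\<exists>z\<in>Z. card (R z) \<ge> 3"
proof -
  define A1 where "A1 = {i\<in>I. \<sigma> i \<le> t1 \<and> t1 < \<sigma> i + L}"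
  define A2 where "A2 = {i\<in>I. \<sigma> i < t1 \<and> t1 \<le> \<sigma> i + L}"
  have "card A1 + card A2 \<ge> 5" using upper[of t1] assms unfolding A1_def A2_def by linarith
  then have "card A1 \<ge> 3 \<or> card A2 \<ge> 3" by linarith
  then show ?thesis
  proof
    assume c: "card A1 \<ge> 3"
    then obtain i where i: "i \<in> A1" by fastforce
    define W where "W = {w\<in>Z. w \<le> t1}"
    have "finite W" unfolding W_def using finZ by simp
    have "\<sigma> i \<in> W" using i sigZ unfolding W_def A1_def by auto
    then have "W \<noteq> {}" by blast
    define z where "z = Max W"
    have zW: "z \<in> W" unfolding z_def using \<open>finite W\<close> \<open>W \<noteq> {}\<close> by simp
    have "A1 \<subseteq> R z"
    proof
      fix j assume j: "j \<in> A1"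
      then have "\<sigma> j \<in> W" using sigZ unfolding W_def A1_def by auto
      then have "\<sigma> j \<le> z" unfolding z_def using \<open>finite W\<close> by simp
      moreover have "z \<le> t1" using zW unfolding W_def by simp
      ultimately show "j \<in> R z" using j unfolding A1_def R_def by auto
    qed
    then have "card A1 \<le> card (R z)" using finR by (rule card_mono[rotated])
    then have "3 \<le> card (R z)" using c by linarith
    moreover have "z \<in> Z" using zW unfolding W_def by simp
    ultimately show ?thesis by blast
  next
    assume c: "card A2 \<ge> 3"
    then obtain i where i: "i \<in> A2" by fastforce
    define W where "W = {w\<in>Z. w < t1}"
    have "finite W" unfolding W_def using finZ by simp
    have "\<sigma> i \<in> W" using i sigZ unfolding W_def A2_def by auto
    then have "W \<noteq> {}" by blast
    define z where "z = Max W"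
    have zW: "z \<in> W" unfolding z_def using \<open>finite W\<close> \<open>W \<noteq> {}\<close> by simp
    have "A2 \<subseteq> R z"
    proof
      fix j assume j: "j \<in> A2"
      then have "\<sigma> j \<in> W" using sigZ unfolding W_def A2_def by auto
      then have "\<sigma> j \<le> z" unfolding z_def using \<open>finite W\<close> by simp
      moreover have "z < t1" using zW unfolding W_def by simp
      ultimately show "j \<in> R z" using j unfolding A2_def R_def by auto
    qed
    then have "card A2 \<le> card (R z)" using finR by (rule card_mono[rotated])
    then have "3 \<le> card (R z)" using c by linarith
    moreover have "z \<in> Z" using zW unfolding W_def by simp
    ultimately show ?thesis by blast
  qed
qed

lemma R0: "R 0 = {i0}"
proof
  show "R 0 \<subseteq> {i0}"
  proof
    fix i assume "i \<in> R 0"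
    then have "i \<in> I" "\<sigma> i \<le> 0" unfolding R_def by auto
    then show "i \<in> {i0}" using pos[of i] by force
  qed
  show "{i0} \<subseteq> R 0" using i0 L unfolding R_def by auto
qed


theorem contradiction:
  assumes big: "f t1 \<ge> 5"
  shows False
proof -
  define Q where "Q = {z\<in>Z. card (R z) \<ge> 3}"
  have finQ: "finite Q" unfolding Q_def using finZ by simp
  have "Q \<noteq> {}" using step1[OF big] unfolding Q_def by blast
  define zs where "zs = Min Q"
  have zsQ: "zs \<in> Q" unfolding zs_def using finQ \<open>Q \<noteq> {}\<close> by simp
  have zsZ: "zs \<in> Z" and n3: "card (R zs) \<ge> 3" using zsQ unfolding Q_def by auto
  have zsmin: "w \<in> Z \<Longrightarrow> card (R w) \<ge> 3 \<Longrightarrow> zs \<le> w" for w unfolding zs_def using finQ Q_def by simp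
  have "zs \<noteq> 0" using n3 R0 by auto
  then have zspos: "zs > 0" using Z_nonneg[OF zsZ] by simp
  define W where "W = {w\<in>Z. w < zs}"
  have finW: "finite W" unfolding W_def using finZ by simp
  have "0 \<in> W" unfolding W_def using sigZ[OF i0(1)] i0(2) zspos by simp
  then have "W \<noteq> {}" by blast
  define zp where "zp = Max W"
  have zpW: "zp \<in> W" unfolding zp_def using finW \<open>W \<noteq> {}\<close> by simp
  have zpZ: "zp \<in> Z" and zplt: "zp < zs" using zpW unfolding W_def by auto
  have between: "w \<in> Z \<Longrightarrow> w < zs \<Longrightarrow> w \<le> zp" for w unfolding zp_def using finW W_def by simp
  have np2: "card (R zp) \<le> 2" using zsmin[OF zpZ] zplt by force
  define n where "n = card (R zs)"
  define En where "En = {i\<in>I. \<sigma> i = zs}"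
  define Lv where "Lv = {i\<in>I. \<sigma> i + L = zs}"
  have EnR: "En \<subseteq> R zs" unfolding En_def R_def using L by auto
  have LvR: "Lv \<subseteq> R zp"
  proof
    fix i assume i: "i \<in> Lv"
    then have "i \<in> I" "\<sigma> i + L = zs" unfolding Lv_def by auto
    then have "\<sigma> i < zs" using L by simp
    then have "\<sigma> i \<le> zp" using between sigZ \<open>i \<in> I\<close> by blast
    then show "i \<in> R zp" unfolding R_def using \<open>i \<in> I\<close> \<open>\<sigma> i + L = zs\<close> zplt by simp
  qed
  have incl1: "R zs - En \<subseteq> R zp"
  proof
    fix i assume i: "i \<in> R zs - En"
    then have iI: "i \<in> I" and a: "\<sigma> i \<le> zs" "zs < \<sigma> i + L" "\<sigma> i \<noteq> zs" unfolding R_def En_def by auto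
    then have "\<sigma> i \<le> zp" using between sigZ by force
    then show "i \<in> R zp" unfolding R_def using iI a zplt by simp
  qed
  have incl2: "R zp \<subseteq> (R zs - En) \<union> Lv"
  proof
    fix i assume i: "i \<in> R zp"
    then have iI: "i \<in> I" and a: "\<sigma> i \<le> zp" "zp < \<sigma> i + L" unfolding R_def by auto
    have "\<sigma> i + L \<ge> zs"
    proof (rule ccontr)
      assume "\<not> \<sigma> i + L \<ge> zs"
      then have "\<sigma> i + L \<le> zp" using between sigLZ[OF iI] by simp
      then show False using a by simp
    qed
    then show "i \<in> (R zs - En) \<union> Lv" using iI a zplt unfolding R_def En_def Lv_def by auto
  qed
  have finEn: "finite En" unfolding En_def using finI by simp
  have finLv: "finite Lv" unfolding Lv_def using finI by simp
  obtain tg where "f tg = n" using generic unfolding n_def by blast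
  then have n_vals: "n \<noteq> 4" "n \<le> 6" using vals[of tg] n3 unfolding n_def by auto
  have "R zs \<subseteq> (R zs - En) \<union> En" by blast
  then have "n \<le> card (R zs - En) + card En" unfolding n_def
    by (meson card_Un_le card_mono finEn finR finite_Diff finite_UnI order_trans)
  moreover have "card (R zs - En) \<le> card (R zp)" using incl1 finR by (rule card_mono[rotated])
  ultimately have En_big: "n \<le> 2 + card En" using np2 by linarith
  obtain t2 where t2: "f t2 = n + card {i\<in>R zs. zs - \<sigma> i \<in> D}" using realize unfolding n_def by blast
  have "En \<subseteq> {i\<in>R zs. zs - \<sigma> i \<in> D}" using EnR D0 unfolding En_def by auto
  then have "card En \<le> card {i\<in>R zs. zs - \<sigma> i \<in> D}" using finR by (intro card_mono) auto
  then have "n + card En \<le> 6" using vals[of t2] t2 n3 unfolding n_def by fastforce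
  then have n_eq: "n = 3" using En_big n_vals n3 unfolding n_def by linarith
  have "card En \<ge> 1" using En_big n_eq by linarith
  then obtain e where eEn: "e \<in> En" by fastforce
  then have eR: "e \<in> R zs" and se: "\<sigma> e = zs" using EnR unfolding En_def by auto
  have cls2: "\<exists>k\<in>R zs. k \<noteq> i \<and> \<sigma> i - \<sigma> k \<in> D" if iR: "i \<in> R zs" for i
  proof (rule ccontr)
    assume "\<not> ?thesis"
    then have "{k\<in>R zs. \<sigma> i - \<sigma> k \<in> D} = {i}" using iR D0 by auto
    moreover obtain t3 where "f t3 = n + card {k\<in>R zs. \<sigma> i - \<sigma> k \<in> D}" using realize unfolding n_def by blast
    ultimately have "f t3 = 4" using n_eq by simp
    then show False using vals[of t3] by simp
  qed
  have allD: "zs - \<sigma> j \<in> D" if jR: "j \<in> R zs" for j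
  proof (rule ccontr)
    assume nj: "zs - \<sigma> j \<notin> D"
    obtain k where k: "k \<in> R zs" "k \<noteq> j" "\<sigma> j - \<sigma> k \<in> D" using cls2[OF jR] by blast
    obtain l where l: "l \<in> R zs" "l \<noteq> e" "\<sigma> e - \<sigma> l \<in> D" using cls2[OF eR] by blast
    have "e \<noteq> j" using nj se D0 by auto
    have "k \<noteq> e"
    proof
      assume "k = e"
      then have "-(\<sigma> j - \<sigma> k) \<in> D" using k Dneg by blast
      then show False using nj se \<open>k = e\<close> by simp
    qed
    have "l \<noteq> j" using l nj se by auto
    have "l \<noteq> k"
    proof
      assume "l = k"
      then have "(\<sigma> e - \<sigma> l) - (\<sigma> j - \<sigma> k) \<in> D" using k l Ddiff by blast
      then show False using nj se \<open>l = k\<close> by simp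
    qed
    have "{e, j, k, l} \<subseteq> R zs" using eR jR k l by auto
    then have "card {e, j, k, l} \<le> n" unfolding n_def using finR by (rule card_mono[rotated])
    moreover have "card {e, j, k, l} = 4" using \<open>e \<noteq> j\<close> \<open>k \<noteq> e\<close> \<open>l \<noteq> j\<close> \<open>l \<noteq> k\<close> k(2) l(2) by auto
    ultimately show False using n_eq by simp
  qed
  have allDp: "zs - \<sigma> i \<in> D" if "i \<in> R zp" for i
  proof -
    have "i \<in> (R zs - En) \<union> Lv" using incl2 that by blast
    then show ?thesis
    proof
      assume "i \<in> R zs - En" then show ?thesis using allD by blast
    next
      assume "i \<in> Lv" then have "zs - \<sigma> i = L" unfolding Lv_def by auto
      then show ?thesis using L by simp
    qed
  qed
  have "card (R zp) \<ge> 1"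
  proof -
    define tm where "tm = (zp + zs) / 2"
    have tm: "zp < tm" "tm < zs" unfolding tm_def using zplt by auto
    have "0 \<le> tm" using Z_nonneg[OF zpZ] tm by simp
    moreover have "tm \<le> Smax" using Z_le[OF zsZ] tm by simp
    ultimately have "f tm \<ge> 1" by (rule cover)
    then have "(\<Sum>i\<in>I. g (tm - \<sigma> i)) \<noteq> 0" unfolding fdef by simp
    then obtain i where iI: "i \<in> I" and gi: "g (tm - \<sigma> i) \<noteq> 0" by (meson sum.neutral)
    then have b: "\<sigma> i \<le> tm" "tm \<le> \<sigma> i + L" using gdef[of "tm - \<sigma> i"] by (auto split: if_splits)
    have "\<sigma> i < zs" using b tm by simp
    then have "\<sigma> i \<le> zp" using between sigZ[OF iI] by simp
    moreover have "zp < \<sigma> i + L" using b tm by simp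
    ultimately have "i \<in> R zp" unfolding R_def using iI by simp
    then show ?thesis using finR by (metis One_nat_def Suc_leI card_gt_0_iff empty_iff)
  qed
  have "card (R zp) \<noteq> 2"
  proof
    assume c2: "card (R zp) = 2"
    obtain t4 where t4: "f t4 = card (R zp) + card {i\<in>R zp. zs - \<sigma> i \<in> D}" using realize by blast
    have "{i\<in>R zp. zs - \<sigma> i \<in> D} = R zp" using allDp by blast
    then have "f t4 = 4" using t4 c2 by simp
    then show False using vals[of t4] by simp
  qed
  then have c1: "card (R zp) = 1" using np2 \<open>card (R zp) \<ge> 1\<close> by linarith
  define In where "In = R zs - En"
  have finIn: "finite In" unfolding In_def using finR by simp
  have Rzp_eq: "R zp = In \<union> Lv" using incl1 incl2 LvR unfolding In_def by blast
  have disj1: "In \<inter> Lv = {}"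
  proof -
    have "i \<notin> Lv" if "i \<in> In" for i using that L unfolding In_def R_def Lv_def by auto
    then show ?thesis by blast
  qed
  have cInLv: "card In + card Lv = 1" using c1 Rzp_eq card_Un_disjoint[OF finIn finLv disj1] by simp
  have cInEn: "card In + card En = 3"
    using n_eq card_Diff_subset[OF finEn EnR] card_mono[OF finR EnR] unfolding In_def n_def by simp
  have gz: "g (zs - \<sigma> i) = (if i \<in> En then 1 else 0) + (if i \<in> Lv then 1 else 0) + (if i \<in> In then 2 else 0)"
    if iI: "i \<in> I" for i
  proof (cases "i \<in> En")
    case True
    then have "zs - \<sigma> i = 0" unfolding En_def by simp
    moreover have "i \<notin> Lv" using True L unfolding En_def Lv_def by auto
    moreover have "i \<notin> In" using True unfolding In_def by simp
    ultimately show ?thesis using True gdef[of 0] L by simp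
  next
    case nE: False
    show ?thesis
    proof (cases "i \<in> Lv")
      case True
      then have "zs - \<sigma> i = L" unfolding Lv_def by auto
      moreover have "i \<notin> In" using True disj1 by blast
      ultimately show ?thesis using True nE gdef[of L] L by simp
    next
      case nL: False
      show ?thesis
      proof (cases "i \<in> In")
        case True
        then have a: "i \<in> R zs" "\<sigma> i \<noteq> zs" unfolding In_def En_def using iI by auto
        then have "0 < zs - \<sigma> i" "zs - \<sigma> i < L" unfolding R_def by auto
        moreover have "zs - \<sigma> i \<in> D" using allD a by blast
        ultimately show ?thesis using True nE nL gdef[of "zs - \<sigma> i"] by simp
      next
        case False
        then have "\<not> (\<sigma> i \<le> zs \<and> zs < \<sigma> i + L)" using nE iI unfolding In_def R_def En_def by auto
        moreover have "\<sigma> i \<noteq> zs" using nE iI unfolding En_def by auto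
        moreover have "\<sigma> i + L \<noteq> zs" using nL iI unfolding Lv_def by auto
        ultimately have "zs - \<sigma> i < 0 \<or> zs - \<sigma> i > L" by auto
        then show ?thesis using False nE nL gdef[of "zs - \<sigma> i"] by auto
      qed
    qed
  qed
  have "f zs = (\<Sum>i\<in>I. (if i \<in> En then 1 else 0) + (if i \<in> Lv then 1 else 0) + (if i \<in> In then 2 else 0))"
    unfolding fdef by (rule sum.cong) (use gz in auto)
  also have "\<dots> = card {i\<in>I. i \<in> En} + card {i\<in>I. i \<in> Lv} + 2 * card {i\<in>I. i \<in> In}"
  proof -
    have "(\<Sum>i\<in>I. (if i \<in> In then 2 else 0)::nat) = (\<Sum>i\<in>I. 2 * (if i \<in> In then 1 else 0))"
      by (rule sum.cong) auto
    also have "\<dots> = 2 * card {i\<in>I. i \<in> In}" by (simp add: sum_distrib_left[symmetric] sum_ind_card[OF finI])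
    finally show ?thesis by (simp add: sum.distrib sum_ind_card[OF finI])
  qed
  also have "{i\<in>I. i \<in> En} = En" unfolding En_def by auto
  also have "{i\<in>I. i \<in> Lv} = Lv" unfolding Lv_def by auto
  also have "{i\<in>I. i \<in> In} = In" unfolding In_def using RI by auto
  finally have "f zs = 4" using cInLv cInEn by simp
  then show False using vals[of zs] by simp
qed

end

definition pickf :: "(nat \<Rightarrow> real) \<Rightarrow> nat set \<Rightarrow> nat" where
  "pickf x C = (SOME m. m \<notin> C \<and> (\<forall>k. k \<notin> C \<longrightarrow> x k \<le> x m))"

primrec chs :: "(nat \<Rightarrow> real) \<Rightarrow> nat \<Rightarrow> nat set" where
  "chs x 0 = {}"
| "chs x (Suc n) = insert (pickf x (chs x n)) (chs x n)"

lemma sorting: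
  fixes x :: "nat \<Rightarrow> real"
  assumes xpos: "\<And>n. x n > 0" and xs: "summable x"
  shows "\<exists>\<sigma>::nat\<Rightarrow>nat. bij \<sigma> \<and> (\<forall>m n::nat. m \<le> n \<longrightarrow> x (\<sigma> n) \<le> x (\<sigma> m))"
proof -
  have x0: "x \<longlonglongrightarrow> 0" using xs summable_LIMSEQ_zero by blast
  have finge: "finite {k. x k \<ge> e}" if epos: "e > 0" for e
  proof -
    obtain N where N: "\<forall>n\<ge>N. \<bar>x n\<bar> < e" using x0 epos LIMSEQ_iff[of x 0] by auto
    have "{k. x k \<ge> e} \<subseteq> {..<N}"
    proof
      fix k assume "k \<in> {k. x k \<ge> e}"
      then have "x k \<ge> e" by simp
      show "k \<in> {..<N}"
      proof (rule ccontr)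
        assume "k \<notin> {..<N}"
        then have "k \<ge> N" by simp
        then have "\<bar>x k\<bar> < e" using N by simp
        then show False using \<open>x k \<ge> e\<close> by simp
      qed
    qed
    then show ?thesis using finite_subset by blast
  qed
  have pick_ex: "\<exists>m. m \<notin> C \<and> (\<forall>k. k \<notin> C \<longrightarrow> x k \<le> x m)" if finC: "finite C" for C
  proof -
    obtain c where c: "c \<notin> C" using finC ex_new_if_finite[OF infinite_UNIV_nat] by blast
    define S where "S = {k. k \<notin> C \<and> x k \<ge> x c}"
    have "S \<subseteq> {k. x k \<ge> x c}" unfolding S_def by blast
    then have finS: "finite S" using finge[OF xpos[of c]] finite_subset by blast
    have "c \<in> S" unfolding S_def using c by simp
    then have "S \<noteq> {}" by blast
    have "Max (x ` S) \<in> x ` S" using finS \<open>S \<noteq> {}\<close> by simp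
    then obtain m where m1: "m \<in> S" "x m = Max (x ` S)" by auto
    have "\<forall>k\<in>S. x k \<le> x m" using finS m1(2) by simp
    note m = m1(1) this
    have "\<forall>k. k \<notin> C \<longrightarrow> x k \<le> x m"
    proof (intro allI impI)
      fix k assume k: "k \<notin> C"
      show "x k \<le> x m"
      proof (cases "x k \<ge> x c")
        case True then show ?thesis using m k unfolding S_def by simp
      next
        case False then show ?thesis using m(1) unfolding S_def by simp
      qed
    qed
    then show ?thesis using m(1) unfolding S_def by blast
  qed
  define \<sigma> where "\<sigma> n = pickf x (chs x n)" for n
  have finch: "finite (chs x n)" for n by (induction n) auto
  have P: "\<sigma> n \<notin> chs x n \<and> (\<forall>k. k \<notin> chs x n \<longrightarrow> x k \<le> x (\<sigma> n))" for n
    unfolding \<sigma>_def pickf_def using someI_ex[OF pick_ex[OF finch[of n]]] by simp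
  have chs_eq: "chs x n = \<sigma> ` {..<n}" for n
    by (induction n) (auto simp: \<sigma>_def lessThan_Suc)
  have chs_mono: "m \<le> n \<Longrightarrow> chs x m \<subseteq> chs x n" for m n
    unfolding chs_eq by auto
  have inj: "inj \<sigma>"
  proof (rule injI)
    fix m n assume e: "\<sigma> m = \<sigma> n"
    show "m = n"
    proof (rule ccontr)
      assume "m \<noteq> n"
      then have "m < n \<or> n < m" by auto
      then show False
      proof
        assume "m < n" then have "\<sigma> m \<in> chs x n" unfolding chs_eq by auto
        then show False using P[of n] e by simp
      next
        assume "n < m" then have "\<sigma> n \<in> chs x m" unfolding chs_eq by auto
        then show False using P[of m] e by simp
      qed
    qed
  qed
  have monoxs: "x (\<sigma> n) \<le> x (\<sigma> m)" if "m \<le> n" for m n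
  proof -
    have "\<sigma> n \<notin> chs x m" using P[of n] chs_mono[OF that] by blast
    then show ?thesis using P[of m] by blast
  qed
  have surj: "surj \<sigma>"
  proof (rule ccontr)
    assume "\<not> surj \<sigma>"
    then obtain k where k: "k \<notin> range \<sigma>" by blast
    then have kle: "x k \<le> x (\<sigma> n)" for n using P[of n] unfolding chs_eq by blast
    obtain N :: nat where N: "suminf x / x k < real N" using reals_Archimedean2 by blast
    have "real N * x k \<le> (\<Sum>n<N. x (\<sigma> n))"
      using sum_mono[of "{..<N}" "\<lambda>_. x k" "\<lambda>n. x (\<sigma> n)"] kle by simp
    also have "\<dots> = sum x (\<sigma> ` {..<N})" using inj by (simp add: sum.reindex inj_on_subset)
    also have "\<dots> \<le> suminf x"
      by (rule sum_le_suminf[OF xs]) (use xpos less_imp_le in auto)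
    finally have "real N * x k \<le> suminf x" .
    moreover have "suminf x < real N * x k" using N xpos[of k] by (simp add: divide_less_eq)
    ultimately show False by simp
  qed
  have "bij \<sigma>" using inj surj by (simp add: bij_def)
  moreover have "\<forall>m n. m \<le> n \<longrightarrow> x (\<sigma> n) \<le> x (\<sigma> m)"
  proof (intro allI impI)
    fix m n :: nat assume mn: "m \<le> n"
    show "x (\<sigma> n) \<le> x (\<sigma> m)" by (rule monoxs[OF mn])
  qed
  ultimately have "bij \<sigma> \<and> (\<forall>m n. m \<le> n \<longrightarrow> x (\<sigma> n) \<le> x (\<sigma> m))" by (rule conjI)
  then show ?thesis by (intro exI[where x=\<sigma>])
qed


lemma transfer:
  fixes x :: "nat \<Rightarrow> real" and \<sigma> :: "nat \<Rightarrow> nat"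
  assumes xpos: "\<And>n. x n > 0" and xs: "summable x" and b: "bij \<sigma>"
  shows "posseq (x \<circ> \<sigma>)" "\<And>t. cardfun (x \<circ> \<sigma>) t = cardfun x t"
    "achievement_set (x \<circ> \<sigma>) = achievement_set x"
proof -
  interpret px: posseq x using xpos xs by unfold_locales
  have inj: "inj \<sigma>" and surj: "surj \<sigma>" using b by (auto simp: bij_def)
  have "(x \<circ> \<sigma>) summable_on UNIV"
    using summable_on_reindex[of \<sigma> UNIV x] inj surj px.summ_UNIV by simp
  then have ys: "summable (x \<circ> \<sigma>)"
    using summable_on_UNIV_nonneg_real_iff[of "x \<circ> \<sigma>"] xpos less_imp_le by auto
  show py: "posseq (x \<circ> \<sigma>)" by unfold_locales (use xpos ys in auto)
  interpret py: posseq "x \<circ> \<sigma>" by (rule py)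
  have sbeq: "py.sb C = px.sb (\<sigma> ` C)" for C
    unfolding py.sb_def px.sb_def using infsum_reindex[of \<sigma> C x] inj by (simp add: inj_on_subset)
  have bb: "bij_betw (\<lambda>C. \<sigma> ` C) (reps (x \<circ> \<sigma>) t) (reps x t)" for t
  proof (rule bij_betw_imageI)
    show "inj_on (\<lambda>C. \<sigma> ` C) (reps (x \<circ> \<sigma>) t)"
      using inj by (simp add: inj_on_def inj_image_eq_iff)
    show "(\<lambda>C. \<sigma> ` C) ` reps (x \<circ> \<sigma>) t = reps x t"
    proof
      show "(\<lambda>C. \<sigma> ` C) ` reps (x \<circ> \<sigma>) t \<subseteq> reps x t"
        unfolding py.reps_eq px.reps_eq using sbeq by auto
      show "reps x t \<subseteq> (\<lambda>C. \<sigma> ` C) ` reps (x \<circ> \<sigma>) t"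
      proof
        fix B assume B: "B \<in> reps x t"
        have "\<sigma> ` (\<sigma> -` B) = B" using surj by (simp add: surj_image_vimage_eq)
        then have "\<sigma> -` B \<in> reps (x \<circ> \<sigma>) t" using B sbeq unfolding py.reps_eq px.reps_eq by simp
        then show "B \<in> (\<lambda>C. \<sigma> ` C) ` reps (x \<circ> \<sigma>) t" using \<open>\<sigma> ` (\<sigma> -` B) = B\<close>
          by (metis image_eqI)
      qed
    qed
  qed
  show "cardfun (x \<circ> \<sigma>) t = cardfun x t" for t
  proof -
    have c: "card (reps (x \<circ> \<sigma>) t) = card (reps x t)" using bb[of t] by (rule bij_betw_same_card)
    have f: "finite (reps (x \<circ> \<sigma>) t) = finite (reps x t)" using bb[of t] by (rule bij_betw_finite)
    have "countable (reps (x \<circ> \<sigma>) t) = countable (reps x t)"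
    proof
      assume "countable (reps (x \<circ> \<sigma>) t)"
      then have "countable ((\<lambda>C. \<sigma> ` C) ` reps (x \<circ> \<sigma>) t)" by simp
      then show "countable (reps x t)" using bb[of t] by (simp add: bij_betw_def)
    next
      assume "countable (reps x t)"
      then have "countable ((\<lambda>C. \<sigma> ` C) ` reps (x \<circ> \<sigma>) t)" using bb[of t] by (simp add: bij_betw_def)
      then show "countable (reps (x \<circ> \<sigma>) t)"
        using bb[of t] countable_image_inj_on by (auto simp: bij_betw_def)
    qed
    then show ?thesis unfolding cardfun_def using c f by simp
  qed
  show "achievement_set (x \<circ> \<sigma>) = achievement_set x"
  proof -
    have "(reps (x \<circ> \<sigma>) t = {}) = (reps x t = {})" for t
      using bb[of t] unfolding bij_betw_def by (metis image_is_empty)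
    then show ?thesis unfolding achievement_set_def by simp
  qed
qed


theorem theorem7p7:
  fixes M :: "cval set"
  assumes "I1 M" and "bounded_cset M" and "Fin 4 \<notin> M"
    and "\<exists>k\<ge>5. Fin k \<in> M"
  shows "\<exists>k\<ge>7. Fin k \<in> M"
proof (rule ccontr)
  assume no7: "\<not> (\<exists>k\<ge>7. Fin k \<in> M)"
  obtain x a b where xpos: "\<And>n. x n > 0" and xs: "summable x"
    and Ax: "achievement_set x = {a..b}" and Mx: "M = cardfun x ` achievement_set x"
    using assms(1) unfolding I1_def by blast
  obtain \<sigma> where bs: "bij \<sigma>" and smono: "\<forall>m n::nat. m \<le> n \<longrightarrow> x (\<sigma> n) \<le> x (\<sigma> m)"
    using sorting[OF xpos xs] by blast
  define y where "y = x \<circ> \<sigma>"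
  have py: "posseq y" and cf: "\<And>t. cardfun y t = cardfun x t" and Ay: "achievement_set y = achievement_set x"
    using transfer[OF xpos xs bs] unfolding y_def by auto
  interpret posseq y by (rule py)
  have "achievement_set y = {a..b}" using Ay Ax by simp
  then have Ay0: "achievement_set y = {0..sb UNIV}" by (rule A_interval)
  interpret sortedseq y
  proof unfold_locales
    show "\<And>m n. m \<le> n \<Longrightarrow> y n \<le> y m" using smono unfolding y_def by simp
    show "achievement_set y = {0..sb UNIV}" by (rule Ay0)
  qed
  have My: "M = cardfun y ` achievement_set y" using Mx cf Ay by (simp add: image_def)
  obtain N where N: "M \<subseteq> Fin ` {1..N}" using assms(2) unfolding bounded_cset_def by blast
  have finFin: "finite (reps y t) \<and> cardfun y t = Fin (card (reps y t))" if "cardfun y t = Fin k" for t k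
  proof -
    have "finite (reps y t)"
    proof (rule ccontr)
      assume "\<not> finite (reps y t)"
      then have "cardfun y t = Omega \<or> cardfun y t = Cont" unfolding cardfun_def by simp
      then show False using that by auto
    qed
    then show ?thesis unfolding cardfun_def by simp
  qed
  have inM: "Fin (card (reps y t)) \<in> M \<and> finite (reps y t)" if "reps y t \<noteq> {}" for t
  proof -
    have tA: "t \<in> achievement_set y" using that unfolding achievement_set_def by simp
    then have "cardfun y t \<in> M" using My by simp
    then obtain k where "cardfun y t = Fin k" using N by auto
    then show ?thesis using finFin \<open>cardfun y t \<in> M\<close> by metis
  qed
  have fin: "finite (reps y t) \<and> card (reps y t) \<le> N" for t
  proof (cases "reps y t = {}")
    case True then show ?thesis by simp
  next
    case False
    then have "Fin (card (reps y t)) \<in> M" "finite (reps y t)" using inM by auto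
    then show ?thesis using N by auto
  qed
  obtain n0 where n0: "\<forall>n\<ge>n0. y n = r (Suc n)" using finitely_many_strict[OF fin] by blast
  interpret geomtail y n0 by unfold_locales (use n0 in auto)
  define f where "f t = card (reps y t)" for t
  have Smax: "sb F + 2 * q \<le> sb UNIV" if "F \<in> Pow {..<n0}" for F
  proof -
    have "F \<subseteq> {..<n0}" using that by simp
    then have d: "F \<inter> {n0..} = {}" using sep_lemmas(3)[of F n0 "{n0..}"] by simp
    have "sb F + 2 * q = sb (F \<union> {n0..})" using sb_Un[OF d] r_n0 unfolding r_def by simp
    also have "\<dots> \<le> sb UNIV" by (rule sb_le_UNIV)
    finally show ?thesis .
  qed
  interpret comb "Pow {..<n0}" sb Dy "2 * q" "sb UNIV" "{}" f g
  proof unfold_locales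
    show "finite (Pow {..<n0})" by simp
    show "{} \<in> Pow {..<n0}" by simp
    show "sb {} = 0" by simp
    show "\<And>i. i \<in> Pow {..<n0} \<Longrightarrow> i \<noteq> {} \<Longrightarrow> sb i > 0" using sb_pos by blast
    show "2 * q > 0" using q_pos by simp
    show "2 * q \<in> Dy" by (rule Dy_L)
    show "\<And>a b. a \<in> Dy \<Longrightarrow> b \<in> Dy \<Longrightarrow> a - b \<in> Dy" by (rule Dy_diff)
    show "countable Dy" by (rule Dy_countable)
    show "\<And>a b \<tau>. a < b \<Longrightarrow> \<exists>t. a < t \<and> t < b \<and> t - \<tau> \<in> Dy" by (rule Dy_dense)
    show "\<And>i. i \<in> Pow {..<n0} \<Longrightarrow> sb i + 2 * q \<le> sb UNIV" by (rule Smax)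
    show "\<And>t. 0 \<le> t \<Longrightarrow> t \<le> sb UNIV \<Longrightarrow> f t \<ge> 1"
    proof -
      fix t :: real assume "0 \<le> t" "t \<le> sb UNIV"
      then have "t \<in> achievement_set y" using Ay0 by simp
      then have "reps y t \<noteq> {}" unfolding achievement_set_def by simp
      then show "f t \<ge> 1" unfolding f_def using fin[of t] by (simp add: Suc_leI card_gt_0_iff)
    qed
    show "\<And>t. f t = (\<Sum>i\<in>Pow {..<n0}. g (t - sb i))" unfolding f_def using card_decomp by simp
    show "\<And>s. g s = (if 0 \<le> s \<and> s \<le> 2 * q then (if s \<in> Dy \<and> 0 < s \<and> s < 2 * q then 2 else 1) else 0)"
      by (rule g_formula)
    show "\<And>t. f t \<ge> 1 \<Longrightarrow> f t \<noteq> 4 \<and> f t \<le> 6"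
    proof -
      fix t assume "f t \<ge> 1"
      then have "reps y t \<noteq> {}" unfolding f_def by auto
      then have "Fin (f t) \<in> M" using inM unfolding f_def by blast
      have "f t \<noteq> 4" using \<open>Fin (f t) \<in> M\<close> assms(3) by auto
      moreover have "\<not> f t \<ge> 7" using \<open>Fin (f t) \<in> M\<close> no7 by blast
      ultimately show "f t \<noteq> 4 \<and> f t \<le> 6" by simp
    qed
  qed
  obtain k where k: "k \<ge> 5" "Fin k \<in> M" using assms(4) by blast
  then obtain t where t: "t \<in> achievement_set y" "cardfun y t = Fin k" using My by auto
  then have "f t = k" using finFin unfolding f_def by fastforce
  then show False using contradiction[of t] k by simp
qed


end
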